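(* Let $k\ge1$ be odd, $\omega=\frac{-1+\sqrt{-3}}{2}$, and with $S,T,T_\omega=\begin{psmallmatrix}1&\omega\\0&1\end{psmallmatrix},L=\begin{psmallmatrix}\omega^2&0\\0&\omega\end{psmallmatrix},U=TS,E=T_\omega SL$ let $W_{k,k}=\ker(\mathbf{1}+S)\cap\ker(\mathbf{1}-L)\cap\ker(\mathbf{1}+U+U^2)\cap\ker(\mathbf{1}+E+E^2)$. Let $\zeta=e^{\pi i/3}$ and $\varepsilon_3=\begin{psmallmatrix}\zeta&0\\0&1\end{psmallmatrix}$, so $P|\varepsilon_3=P(\zeta z,\bar\zeta\bar z)$. Then $W_{k,k}|\varepsilon_3=W_{k,k}$, and hence $$W_{k,k}=\bigoplus_{j=1}^{6}W_{k,k}^{\zeta^j},\qquad W_{k,k}^{\zeta^j}=W_{k,k}\cap\{P\in V_{k,k}:P(\zeta z,\bar\zeta\bar z)=\zeta^jP(z,\bar z)\}.$$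
   Context: $S=\begin{psmallmatrix}0&-1\\1&0\end{psmallmatrix}$, $T=\begin{psmallmatrix}1&1\\0&1\end{psmallmatrix}$. $V_{k,k}$: polynomials $\sum_{0\le i,j\le k}c_{ij}z^i\bar z^j$ over $\mathbb{C}$ with right action $(P|\gamma)(z,\bar z)=(cz+e)^k\overline{(cz+e)}^kP\!\left(\frac{az+b}{cz+e},\frac{\bar a\bar z+\bar b}{\bar c\bar z+\bar e}\right)$ for $\gamma=\begin{psmallmatrix}a&b\\c&e\end{psmallmatrix}$, extended linearly; $\ker(X)=\{P:P|X=0\}$; $W|\varepsilon_3=\{P|\varepsilon_3:P\in W\}$. *)

theory Defs
  imports "HOL-Analysis.Analysis"
begin

definition mat2 :: "complex \<Rightarrow> complex \<Rightarrow> complex \<Rightarrow> complex \<Rightarrow> complex^2^2" where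
  "mat2 a b c e = (\<chi> i j. if i = 1 then (if j = 1 then a else b) else (if j = 1 then c else e))"

text \<open>An element of V_{k,k} is given by its coefficient array c i j (coefficient of z^i zbar^j),
  vanishing outside 0..k x 0..k.\<close>

definition Vkk :: "nat \<Rightarrow> (nat \<Rightarrow> nat \<Rightarrow> complex) set" where
  "Vkk k = {c. \<forall>i j. (k < i \<or> k < j) \<longrightarrow> c i j = 0}"

definition evalP :: "nat \<Rightarrow> (nat \<Rightarrow> nat \<Rightarrow> complex) \<Rightarrow> complex \<Rightarrow> complex" where
  "evalP k c z = (\<Sum>i\<le>k. \<Sum>j\<le>k. c i j * z ^ i * cnj z ^ j)"

text \<open>The slash action P|gamma, written out as the polynomial
  (cz+e)^k conj(cz+e)^k P((az+b)/(cz+e), conj((az+b)/(cz+e)))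
  = sum c_ij (az+b)^i (cz+e)^(k-i) (conj a zbar + conj b)^j (conj c zbar + conj e)^(k-j),
  evaluated at z (with zbar = cnj z).\<close>

definition slash :: "nat \<Rightarrow> complex^2^2 \<Rightarrow> (nat \<Rightarrow> nat \<Rightarrow> complex) \<Rightarrow> complex \<Rightarrow> complex" where
  "slash k g P z =
     (let a = g$1$1; b = g$1$2; c = g$2$1; e = g$2$2 in
      (\<Sum>i\<le>k. \<Sum>j\<le>k. P i j * (a * z + b) ^ i * (c * z + e) ^ (k - i)
                       * (cnj a * cnj z + cnj b) ^ j * (cnj c * cnj z + cnj e) ^ (k - j)))"

definition Smat :: "complex^2^2" where "Smat = mat2 0 (-1) 1 0"
definition Tmat :: "complex^2^2" where "Tmat = mat2 1 1 0 1"
definition omega :: complex where "omega = (-1 + \<i> * complex_of_real (sqrt 3)) / 2"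
definition Tomega :: "complex^2^2" where "Tomega = mat2 1 omega 0 1"
definition Lmat :: "complex^2^2" where "Lmat = mat2 (omega^2) 0 0 omega"
definition Umat :: "complex^2^2" where "Umat = Tmat ** Smat"
definition Emat :: "complex^2^2" where "Emat = Tomega ** Smat ** Lmat"
definition zeta :: complex where "zeta = exp (complex_of_real pi * \<i> / 3)"
definition eps3 :: "complex^2^2" where "eps3 = mat2 zeta 0 0 1"

definition Wkk :: "nat \<Rightarrow> (nat \<Rightarrow> nat \<Rightarrow> complex) set" where
  "Wkk k = {P \<in> Vkk k.
      (\<forall>z. slash k (mat 1) P z + slash k Smat P z = 0) \<and>
      (\<forall>z. slash k (mat 1) P z - slash k Lmat P z = 0) \<and>
      (\<forall>z. slash k (mat 1) P z + slash k Umat P z + slash k (Umat ** Umat) P z = 0) \<and>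
      (\<forall>z. slash k (mat 1) P z + slash k Emat P z + slash k (Emat ** Emat) P z = 0)}"

definition Weig :: "nat \<Rightarrow> complex \<Rightarrow> (nat \<Rightarrow> nat \<Rightarrow> complex) set" where
  "Weig k lam = {P \<in> Wkk k. \<forall>z. evalP k P (zeta * z) = lam * evalP k P z}"

end

theory Submission imports Defs "HOL-Computational_Algebra.Polynomial" begin

lemma poly_nat_zero:
  fixes p :: "complex poly"
  assumes "\<And>n::nat. poly p (of_nat n) = 0"
  shows "p = 0"
proof (rule ccontr)
  assume "p \<noteq> 0"
  then have "finite {x. poly p x = 0}" by (rule poly_roots_finite)
  moreover have "range (of_nat :: nat \<Rightarrow> complex) \<subseteq> {x. poly p x = 0}" using assms by auto
  ultimately have "finite (range (of_nat :: nat \<Rightarrow> complex))" by (rule finite_subset[rotated])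
  moreover have "inj (of_nat :: nat \<Rightarrow> complex)" by (simp add: inj_on_def)
  ultimately show False using finite_imageD by (metis infinite_UNIV_char_0)
qed

lemma poly_expand:
  "poly (\<Sum>i\<le>k. \<Sum>j\<le>k. smult (c i j) ([:a,b:]^i * [:a',b':]^j)) x
   = (\<Sum>i\<le>k. \<Sum>j\<le>k. c i j * (a + x*b)^i * (a' + x*b')^j)"
  by (simp add: poly_sum mult.assoc)

lemma poly2_zero:
  fixes c :: "nat \<Rightarrow> nat \<Rightarrow> complex"
  assumes H: "\<And>z. (\<Sum>i\<le>k. \<Sum>j\<le>k. c i j * z^i * cnj z^j) = 0"
  assumes "i \<le> k" "j \<le> k"
  shows "c i j = 0"
proof -
  define R where "R x y = (\<Sum>i\<le>k. \<Sum>j\<le>k. c i j * (x + \<i>*y)^i * (x - \<i>*y)^j)" for x y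
  have R1: "R (of_real x) (of_real y) = 0" for x y :: real
  proof -
    have "cnj (of_real x + \<i> * of_real y) = of_real x - \<i> * of_real y" by simp
    then show ?thesis using H[of "of_real x + \<i> * of_real y"] by (simp add: R_def)
  qed
  have R2: "R x (of_real y) = 0" for x and y :: real
  proof -
    define p where "p = (\<Sum>i\<le>k. \<Sum>j\<le>k. smult (c i j) ([:\<i> * of_real y,1:]^i * [:-\<i> * of_real y,1:]^j))"
    have pe: "poly p x = R x (of_real y)" for x
      unfolding p_def poly_expand R_def by (simp add: algebra_simps)
    have "p = 0"
      by (rule poly_nat_zero) (metis pe R1 of_real_of_nat_eq)
    then show ?thesis using pe by simp
  qed
  have R3: "R x y = 0" for x y
  proof -
    define q where "q = (\<Sum>i\<le>k. \<Sum>j\<le>k. smult (c i j) ([:x,\<i>:]^i * [:x,-\<i>:]^j))"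
    have qe: "poly q y = R x y" for y
      unfolding q_def poly_expand R_def by (simp add: algebra_simps)
    have "q = 0"
      by (rule poly_nat_zero) (metis qe R2 of_real_of_nat_eq)
    then show ?thesis using qe by simp
  qed
  have R4: "(\<Sum>i\<le>k. \<Sum>j\<le>k. c i j * z^i * w^j) = 0" for z w
  proof -
    have e1: "(z+w)/2 + \<i>*((z-w)/(2*\<i>)) = z" by (simp add: field_simps)
    have e2: "(z+w)/2 - \<i>*((z-w)/(2*\<i>)) = w" by (simp add: field_simps)
    show ?thesis using R3[of "(z+w)/2" "(z-w)/(2*\<i>)"] unfolding R_def e1 e2 .
  qed
  have R5: "(\<Sum>j\<le>k. c i j * w^j) = 0" for w
  proof (rule zero_polynom_imp_zero_coeffs[where n=k and k=i and c="\<lambda>i. \<Sum>j\<le>k. c i j * w^j", simplified])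
    fix z
    show "(\<Sum>i\<le>k. (\<Sum>j\<le>k. c i j * w^j) * z^i) = 0"
    proof -
      have "(\<Sum>i\<le>k. (\<Sum>j\<le>k. c i j * w^j) * z^i) = (\<Sum>i\<le>k. \<Sum>j\<le>k. c i j * z^i * w^j)"
        by (simp add: sum_distrib_left sum_distrib_right mult_ac)
      then show ?thesis using R4[of z w] by simp
    qed
  qed (fact)
  show ?thesis
    by (rule zero_polynom_imp_zero_coeffs[where n=k and k=j and c="c i", OF R5]) (fact)
qed

definition v1 :: "complex \<Rightarrow> complex^2" where "v1 z = (\<chi> i. if i = 1 then z else 1)"

definition FF :: "nat \<Rightarrow> (nat \<Rightarrow> nat \<Rightarrow> complex) \<Rightarrow> complex^2 \<Rightarrow> complex" where
  "FF k P u = (\<Sum>i\<le>k. \<Sum>j\<le>k. P i j * (u$1)^i * (u$2)^(k-i) * (cnj (u$1))^j * (cnj (u$2))^(k-j))"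

lemma mv1: "((g::complex^2^2) *v u)$1 = g$1$1 * u$1 + g$1$2 * u$2"
  by (simp add: matrix_vector_mult_def sum_2)
lemma mv2: "((g::complex^2^2) *v u)$2 = g$2$1 * u$1 + g$2$2 * u$2"
  by (simp add: matrix_vector_mult_def sum_2)
lemma v1_simps [simp]: "v1 z $ 1 = z" "v1 z $ 2 = 1"
  by (simp_all add: v1_def)

lemma slash_FF: "slash k g P z = FF k P (g *v v1 z)"
  unfolding slash_def FF_def Let_def by (simp add: mv1 mv2)

lemma evalP_FF: "evalP k P z = FF k P (v1 z)"
  unfolding evalP_def FF_def by simp

lemma pow_split: "i \<le> k \<Longrightarrow> (c*x)^i * (c*y)^(k-i) = (c::complex)^k * (x^i * y^(k-i))"
proof -
  assume "i \<le> k"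
  then have "c^i * c^(k-i) = c^k" by (simp add: power_add[symmetric])
  then show ?thesis by (simp add: power_mult_distrib)
qed

lemma FF_scale: "FF k P (c *s u) = (c * cnj c)^k * FF k P u"
proof -
  have "FF k P (c *s u) = (\<Sum>i\<le>k. \<Sum>j\<le>k. P i j * ((c * u$1)^i * (c * u$2)^(k-i)) * ((cnj c * cnj (u$1))^j * (cnj c * cnj (u$2))^(k-j)))"
    unfolding FF_def by (simp add: mult.assoc)
  also have "\<dots> = (\<Sum>i\<le>k. \<Sum>j\<le>k. (c * cnj c)^k * (P i j * (u$1)^i * (u$2)^(k-i) * (cnj (u$1))^j * (cnj (u$2))^(k-j)))"
  proof (intro sum.cong refl)
    fix i j assume ij: "i \<in> {..k}" "j \<in> {..k}"
    have a: "(c * u$1)^i * (c * u$2)^(k-i) = c^k * ((u$1)^i * (u$2)^(k-i))" using ij by (simp add: pow_split)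
    have b: "(cnj c * cnj (u$1))^j * (cnj c * cnj (u$2))^(k-j) = cnj c^k * (cnj (u$1)^j * cnj (u$2)^(k-j))" using ij by (simp add: pow_split)
    show "P i j * ((c * u$1)^i * (c * u$2)^(k-i)) * ((cnj c * cnj (u$1))^j * (cnj c * cnj (u$2))^(k-j)) =
      (c * cnj c)^k * (P i j * (u$1)^i * (u$2)^(k-i) * (cnj (u$1))^j * (cnj (u$2))^(k-j))"
      unfolding a b by (simp add: power_mult_distrib mult_ac)
  qed
  also have "\<dots> = (c * cnj c)^k * FF k P u"
    unfolding FF_def by (simp add: sum_distrib_left)
  finally show ?thesis .
qed

lemma FF_neg: "FF k P ((-1) *s u) = FF k P u"
  using FF_scale[of k P "-1" u] by simp

lemma FF_mv_scale: "FF k P ((g::complex^2^2) *v (c *s u)) = (c * cnj c)^k * FF k P (g *v u)"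
  by (simp add: vector_scalar_commute FF_scale)

lemma cont_FF: "continuous_on UNIV (\<lambda>t. FF k P ((g::complex^2^2) *v (\<chi> i. if i = 1 then x else t)))"
  unfolding FF_def by (simp add: mv1 mv2) (intro continuous_intros)

lemma extend:
  fixes G :: "complex^2 \<Rightarrow> complex"
  assumes hom: "\<And>c u. G (c *s u) = (c * cnj c)^k * G u"
    and cont: "\<And>x. continuous_on UNIV (\<lambda>t. G (\<chi> i. if i = 1 then x else t))"
    and z: "\<And>z. G (v1 z) = 0"
  shows "G u = 0"
proof -
  have main: "G u = 0" if "u$2 \<noteq> 0" for u
  proof -
    have "u = (u$2) *s v1 (u$1 / u$2)"
      using that by (simp add: vec_eq_iff forall_2)
    then have "G u = (u$2 * cnj (u$2))^k * G (v1 (u$1 / u$2))" by (metis hom)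
    then show ?thesis using z by simp
  qed
  show ?thesis
  proof (cases "u$2 = 0")
    case False then show ?thesis by (rule main)
  next
    case True
    define h where "h t = G (\<chi> i. if i = 1 then u$1 else t)" for t
    have "(\<chi> i. if i = 1 then u$1 else 0) = u" using True by (simp add: vec_eq_iff forall_2)
    then have h0: "h 0 = G u" unfolding h_def by simp
    have ht: "h t = 0" if "t \<noteq> 0" for t
      unfolding h_def by (rule main) (simp add: that)
    have "isCont h 0" using cont[of "u$1"] unfolding h_def by (simp add: continuous_on_eq_continuous_at)
    then have l1: "(h \<longlongrightarrow> h 0) (at 0)" by (simp add: isCont_def)
    have l2: "(h \<longlongrightarrow> 0) (at 0)"
      by (rule tendsto_eventually) (auto simp: eventually_at_filter ht)
    have "h 0 = 0" using tendsto_unique[OF trivial_limit_at l1 l2] .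
    then show ?thesis using h0 by simp
  qed
qed

lemma om: "omega^2 + omega + 1 = 0"
  by (simp add: omega_def complex_eq_iff power2_eq_square field_simps)

lemma om3: "omega^3 = 1"
proof -
  have "omega^3 - 1 = (omega - 1) * (omega^2 + omega + 1)" by (simp add: algebra_simps power2_eq_square power3_eq_cube)
  then show ?thesis using om by simp
qed

lemma Im_om: "Im omega \<noteq> 0"
  by (simp add: omega_def)

lemma zeta_eq: "zeta = -(omega^2)"
proof -
  have "zeta = cis (pi/3)" by (simp add: zeta_def cis_conv_exp mult_ac)
  also have "\<dots> = Complex (1/2) (sqrt 3 / 2)" by (simp add: cis.ctr cos_60 sin_60)
  finally show ?thesis by (simp add: omega_def complex_eq_iff power2_eq_square field_simps)
qed

lemma mat2_11 [simp]: "mat2 a b c e $ 1 $ 1 = a" and mat2_12 [simp]: "mat2 a b c e $ 1 $ 2 = b"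
  and mat2_21 [simp]: "mat2 a b c e $ 2 $ 1 = c" and mat2_22 [simp]: "mat2 a b c e $ 2 $ 2 = e"
  by (simp_all add: mat2_def)

lemma mat2_mv: "mat2 a b c e *v u = (\<chi> i. if i = 1 then a * u$1 + b * u$2 else c * u$1 + e * u$2)"
  by (simp add: vec_eq_iff forall_2 mv1 mv2)

lemma mat2_mv1 [simp]: "(mat2 a b c e *v u)$1 = a * u$1 + b * u$2"
  by (simp add: mv1)
lemma mat2_mv2 [simp]: "(mat2 a b c e *v u)$2 = c * u$1 + e * u$2"
  by (simp add: mv2)

lemma om3': "omega * (omega * omega) = 1" "omega * omega * omega = 1"
  using om3 by (simp_all add: power3_eq_cube mult.assoc)

lemma mat2_mm: "mat2 a b c e ** mat2 a' b' c' e' = mat2 (a*a' + b*c') (a*b' + b*e') (c*a' + e*c') (c*b' + e*e')"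
  by (simp add: vec_eq_iff forall_2 matrix_matrix_mult_def sum_2)

lemma Umat_eq: "Umat = mat2 1 (-1) 1 0"
  by (simp add: Umat_def Tmat_def Smat_def mat2_mm)
lemma UU_eq: "Umat ** Umat = mat2 0 (-1) 1 (-1)"
  by (simp add: Umat_eq mat2_mm)
lemma Emat_eq: "Emat = mat2 1 (-omega) (omega^2) 0"
  by (simp add: Emat_def Tomega_def Smat_def Lmat_def mat2_mm power2_eq_square om3')
lemma EE_eq: "Emat ** Emat = mat2 0 (-omega) (omega^2) (-1)"
  by (simp add: Emat_eq mat2_mm power2_eq_square om3')

lemma I_S: "eps3 *v (Smat *v u) = (-1) *s (Lmat *v (Smat *v (eps3 *v u)))"
  apply (simp add: eps3_def Smat_def Lmat_def mat2_mm vec_eq_iff forall_2 zeta_eq)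
  using om by algebra

lemma I_L: "eps3 *v (Lmat *v u) = Lmat *v (eps3 *v u)"
  by (simp add: eps3_def Lmat_def mat2_mm vec_eq_iff forall_2 zeta_eq mult_ac)

lemma I_U1: "eps3 *v (Umat *v u) = Lmat *v (Lmat *v (Smat *v ((Umat ** Umat) *v (Smat *v (Lmat *v (eps3 *v u))))))"
  apply (simp add: eps3_def Smat_def Lmat_def UU_eq Umat_eq mat2_mm vec_eq_iff forall_2 zeta_eq)
  using om by algebra

lemma I_U2: "eps3 *v ((Umat ** Umat) *v u) = Lmat *v (Lmat *v (Smat *v (Umat *v (Smat *v (Lmat *v (eps3 *v u))))))"
  apply (simp add: eps3_def Smat_def Lmat_def UU_eq Umat_eq mat2_mm vec_eq_iff forall_2 zeta_eq)
  using om by algebra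

lemma I_E1: "Emat *v u = Lmat *v (Umat *v (Lmat *v (Lmat *v u)))"
  apply (simp add: Emat_eq Lmat_def Umat_eq mat2_mm vec_eq_iff forall_2)
  using om by algebra

lemma I_E2: "(Emat ** Emat) *v u = Lmat *v ((Umat ** Umat) *v (Lmat *v (Lmat *v u)))"
  apply (simp add: EE_eq Lmat_def UU_eq mat2_mm vec_eq_iff forall_2)
  using om by algebra

lemma I_LL: "eps3 *v u = Lmat *v (Lmat *v (eps3 *v (Lmat *v u)))"
  apply (simp add: eps3_def Lmat_def mat2_mm vec_eq_iff forall_2)
  using om by algebra

definition epsP :: "(nat \<Rightarrow> nat \<Rightarrow> complex) \<Rightarrow> (nat \<Rightarrow> nat \<Rightarrow> complex)" where
  "epsP P = (\<lambda>i j. P i j * zeta^i * cnj zeta^j)"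

lemma FF_eps: "FF k (epsP P) u = FF k P (eps3 *v u)"
  unfolding FF_def epsP_def eps3_def by (simp add: power_mult_distrib mult_ac)

lemma cont_FF0: "continuous_on UNIV (\<lambda>t. FF k P (\<chi> i. if i = 1 then x else t))"
  using cont_FF[of k P "mat 1" x] by (simp add: matrix_vector_mul_lid)

lemma W_ext:
  assumes "P \<in> Wkk k"
  shows "FF k P (Smat *v u) = - FF k P u" "FF k P (Lmat *v u) = FF k P u"
    "FF k P u + FF k P (Umat *v u) + FF k P ((Umat ** Umat) *v u) = 0"
proof -
  have A: "\<forall>z. slash k (mat 1) P z + slash k Smat P z = 0"
       "\<forall>z. slash k (mat 1) P z - slash k Lmat P z = 0"
       "\<forall>z. slash k (mat 1) P z + slash k Umat P z + slash k (Umat ** Umat) P z = 0"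
    using assms by (auto simp: Wkk_def)
  have "FF k P u + FF k P (Smat *v u) = 0"
    by (rule extend[where G="\<lambda>u. FF k P u + FF k P (Smat *v u)" and k=k])
      (auto simp: FF_scale FF_mv_scale distrib_left cont_FF0 cont_FF continuous_on_add
         A(1)[unfolded slash_FF matrix_vector_mul_lid])
  then show "FF k P (Smat *v u) = - FF k P u" by (simp add: eq_neg_iff_add_eq_0 add.commute)
  have "FF k P u - FF k P (Lmat *v u) = 0"
    by (rule extend[where G="\<lambda>u. FF k P u - FF k P (Lmat *v u)" and k=k])
      (auto simp: FF_scale FF_mv_scale right_diff_distrib cont_FF0 cont_FF continuous_on_diff
         A(2)[unfolded slash_FF matrix_vector_mul_lid])
  then show "FF k P (Lmat *v u) = FF k P u" by simp
  show "FF k P u + FF k P (Umat *v u) + FF k P ((Umat ** Umat) *v u) = 0"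
    by (rule extend[where G="\<lambda>u. FF k P u + FF k P (Umat *v u) + FF k P ((Umat ** Umat) *v u)" and k=k])
      (auto simp: FF_scale FF_mv_scale distrib_left cont_FF0 cont_FF continuous_on_add
         A(3)[unfolded slash_FF matrix_vector_mul_lid])
qed

lemma Ueps:
  assumes "P \<in> Wkk k"
  shows "FF k P (eps3 *v u) + FF k P (eps3 *v (Umat *v u)) + FF k P (eps3 *v ((Umat ** Umat) *v u)) = 0"
proof -
  note W = W_ext[OF assms]
  define w where "w = Smat *v (Lmat *v (eps3 *v u))"
  have 1: "FF k P (eps3 *v u) = - FF k P w" unfolding w_def W(1) W(2) by simp
  have 2: "FF k P (eps3 *v (Umat *v u)) = - FF k P ((Umat ** Umat) *v w)"
    unfolding I_U1 W(2) W(1) w_def ..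
  have 3: "FF k P (eps3 *v ((Umat ** Umat) *v u)) = - FF k P (Umat *v w)"
    unfolding I_U2 W(2) W(1) w_def ..
  show ?thesis unfolding 1 2 3 using W(3)[of w] by algebra
qed

lemma epsP_W:
  assumes "P \<in> Wkk k"
  shows "epsP P \<in> Wkk k"
proof -
  note W = W_ext[OF assms]
  have V: "epsP P \<in> Vkk k" using assms by (simp add: Wkk_def Vkk_def epsP_def)
  have c1: "slash k (mat 1) (epsP P) z + slash k Smat (epsP P) z = 0" for z
    unfolding slash_FF matrix_vector_mul_lid FF_eps I_S FF_neg W(1) W(2) by simp
  have c2: "slash k (mat 1) (epsP P) z - slash k Lmat (epsP P) z = 0" for z
    unfolding slash_FF matrix_vector_mul_lid FF_eps I_L W(2) by simp
  have c3: "slash k (mat 1) (epsP P) z + slash k Umat (epsP P) z + slash k (Umat ** Umat) (epsP P) z = 0" for z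
    unfolding slash_FF matrix_vector_mul_lid FF_eps by (rule Ueps[OF assms])
  have c4: "slash k (mat 1) (epsP P) z + slash k Emat (epsP P) z + slash k (Emat ** Emat) (epsP P) z = 0" for z
  proof -
    define u where "u = Lmat *v (Lmat *v v1 z)"
    have e0: "FF k P (eps3 *v v1 z) = FF k P (eps3 *v u)" unfolding u_def I_L W(2) ..
    have e1: "FF k P (eps3 *v (Emat *v v1 z)) = FF k P (eps3 *v (Umat *v u))" unfolding u_def I_E1 I_L W(2) ..
    have e2: "FF k P (eps3 *v ((Emat ** Emat) *v v1 z)) = FF k P (eps3 *v ((Umat ** Umat) *v u))" unfolding u_def I_E2 I_L W(2) ..
    show ?thesis unfolding slash_FF matrix_vector_mul_lid FF_eps e0 e1 e2 by (rule Ueps[OF assms])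
  qed
  show ?thesis using V c1 c2 c3 c4 by (simp add: Wkk_def)
qed

lemma cnj_om: "cnj omega = omega^2"
  by (simp add: omega_def complex_eq_iff power2_eq_square field_simps)

lemma z1: "zeta = 1 + omega"
proof -
  have "-(omega^2) = 1 + omega" using om by algebra
  then show ?thesis by (simp add: zeta_eq)
qed
lemma z2: "zeta^2 = omega" using om3' by (simp add: zeta_eq power2_eq_square mult_ac)
lemma z3: "zeta^3 = -1" using om3' by (simp add: zeta_eq power2_eq_square power3_eq_cube mult_ac)
lemma z6: "zeta^6 = 1"
proof -
  have "zeta^6 = (zeta^3)^2" by (simp flip: power_mult)
  then show ?thesis by (simp add: z3)
qed
lemma zne: "zeta \<noteq> 0" using z6 by auto
lemma cnj_z: "cnj zeta = zeta^5"
proof -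
  have "zeta^5 = zeta^3 * zeta^2" by (simp flip: power_add)
  then have "zeta^5 = - omega" by (simp add: z3 z2)
  moreover have "cnj zeta = - omega"
    using om3' by (simp add: zeta_eq cnj_om power2_eq_square mult_ac)
  ultimately show ?thesis by simp
qed

lemma z_mod: "zeta^n = zeta^(n mod 6)"
proof -
  have "n = 6 * (n div 6) + n mod 6" by simp
  then have "zeta^n = zeta^(6 * (n div 6) + n mod 6)" by metis
  also have "\<dots> = (zeta^6)^(n div 6) * zeta^(n mod 6)" by (simp only: power_add power_mult)
  finally have "zeta^n = (zeta^6)^(n div 6) * zeta^(n mod 6)" .
  then show ?thesis by (simp add: z6)
qed

lemma z_ne1: "zeta^r = 1 \<Longrightarrow> r mod 6 = 0"
proof (rule ccontr)
  assume h: "zeta^r = 1" "r mod 6 \<noteq> 0"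
  have lt: "r mod 6 < 6" by simp
  have h2: "zeta^(r mod 6) = 1" using h z_mod by metis
  have "zeta^4 = zeta^3 * zeta^1" by (subst power_add[symmetric]) simp
  then have a4: "zeta^4 = - zeta" by (simp add: z3)
  have q4: "- zeta = -1 - omega" by (simp add: z1)
  have p4: "zeta^4 = -1 - omega" using a4 q4 by (rule trans)
  have "zeta^5 = zeta^3 * zeta^2" by (subst power_add[symmetric]) simp
  then have p5: "zeta^5 = - omega" by (simp add: z3 z2)
  have p1: "zeta^1 = 1 + omega" using z1 by simp
  have P: "zeta^1 \<noteq> 1" "zeta^2 \<noteq> 1" "zeta^3 \<noteq> 1" "zeta^4 \<noteq> 1" "zeta^5 \<noteq> 1"
    unfolding p1 z2 z3 p4 p5 using Im_om by (auto simp: complex_eq_iff)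
  have "r mod 6 \<in> {1,2,3,4,5}" using h(2) lt by auto
  then show False using h2 P by auto
qed

lemma z_inj: "zeta^a = zeta^b \<Longrightarrow> a mod 6 = b mod 6"
proof -
  have gen: "zeta^a = zeta^b \<Longrightarrow> a mod 6 = b mod 6" if "a \<le> b" for a b
  proof -
    assume e: "zeta^a = zeta^b"
    have "zeta^b = zeta^a * zeta^(b-a)" using that by (simp flip: power_add)
    then have "zeta^(b-a) = 1" using e zne by simp
    then have m0: "(b-a) mod 6 = 0" by (rule z_ne1)
    have "b mod 6 = (a + (b - a)) mod 6" using that by simp
    also have "\<dots> = (a mod 6 + (b-a) mod 6) mod 6" by (simp only: mod_add_eq)
    also have "\<dots> = a mod 6" using m0 by simp
    finally show ?thesis by simp
  qed
  assume e: "zeta^a = zeta^b"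
  show "a mod 6 = b mod 6"
  proof (cases "a \<le> b")
    case True then show ?thesis using gen[of a b] e by blast
  next
    case False then have "b \<le> a" by simp
    then show ?thesis using gen[of b a] e by simp
  qed
qed

lemma root_sum: "(\<Sum>n<6. zeta^(n*r)) = (if r mod 6 = 0 then 6 else 0)"
proof -
  have e: "(\<Sum>n<6. zeta^(n*r)) = (\<Sum>n<(6::nat). (zeta^r)^n)"
    by (intro sum.cong refl) (metis power_mult mult.commute)
  show ?thesis
  proof (cases "r mod 6 = 0")
    case True
    then have "zeta^r = 1" using z_mod[of r] by simp
    then show ?thesis using True e by simp
  next
    case False
    have ne: "zeta^r \<noteq> 1"
    proof
      assume "zeta^r = 1"
      then have "r mod 6 = 0" by (rule z_ne1)
      with False show False by simp
    qed
    have "(zeta^r)^6 = zeta^(r*6)" by (simp only: power_mult)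
    also have "\<dots> = (zeta^6)^r" by (simp only: mult.commute[of r 6] power_mult)
    also have "\<dots> = 1" by (simp add: z6)
    finally have "(zeta^r)^6 = 1" .
    then show ?thesis using e False ne by (simp add: geometric_sum)
  qed
qed

lemma FF_lin: "FF k (\<lambda>i j. \<Sum>n\<in>A. c n * R n i j) u = (\<Sum>n\<in>A. c n * FF k (R n) u)"
proof -
  have "FF k (\<lambda>i j. \<Sum>n\<in>A. c n * R n i j) u = (\<Sum>i\<le>k. \<Sum>j\<le>k. \<Sum>n\<in>A. c n * (R n i j * (u$1)^i * (u$2)^(k-i) * (cnj (u$1))^j * (cnj (u$2))^(k-j)))"
    unfolding FF_def by (intro sum.cong refl) (simp add: sum_distrib_right mult.assoc)
  also have "\<dots> = (\<Sum>n\<in>A. \<Sum>i\<le>k. \<Sum>j\<le>k. c n * (R n i j * (u$1)^i * (u$2)^(k-i) * (cnj (u$1))^j * (cnj (u$2))^(k-j)))"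
    by (rule trans[OF sum.cong[OF refl sum.swap] sum.swap])
  also have "\<dots> = (\<Sum>n\<in>A. c n * FF k (R n) u)"
    unfolding FF_def by (simp add: sum_distrib_left)
  finally show ?thesis .
qed

lemma slash_lin: "slash k g (\<lambda>i j. \<Sum>n\<in>A. c n * R n i j) z = (\<Sum>n\<in>A. c n * slash k g (R n) z)"
  unfolding slash_FF FF_lin ..

lemma W_lin:
  assumes "\<And>n. n \<in> A \<Longrightarrow> R n \<in> Wkk k"
  shows "(\<lambda>i j. \<Sum>n\<in>A. c n * R n i j) \<in> Wkk k"
proof -
  have W: "R n \<in> Vkk k"
     "slash k (mat 1) (R n) z + slash k Smat (R n) z = 0"
     "slash k (mat 1) (R n) z - slash k Lmat (R n) z = 0"
     "slash k (mat 1) (R n) z + slash k Umat (R n) z + slash k (Umat ** Umat) (R n) z = 0"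
     "slash k (mat 1) (R n) z + slash k Emat (R n) z + slash k (Emat ** Emat) (R n) z = 0"
     if "n \<in> A" for n z using assms[OF that] by (auto simp: Wkk_def)
  show ?thesis unfolding Wkk_def
  proof (intro CollectI conjI allI)
    show "(\<lambda>i j. \<Sum>n\<in>A. c n * R n i j) \<in> Vkk k" using W(1) by (auto simp: Vkk_def)
  next
    fix z
    show "slash k (mat 1) (\<lambda>i j. \<Sum>n\<in>A. c n * R n i j) z + slash k Smat (\<lambda>i j. \<Sum>n\<in>A. c n * R n i j) z = 0"
      unfolding slash_lin sum.distrib[symmetric] distrib_left[symmetric] using W(2) by simp
    show "slash k (mat 1) (\<lambda>i j. \<Sum>n\<in>A. c n * R n i j) z - slash k Lmat (\<lambda>i j. \<Sum>n\<in>A. c n * R n i j) z = 0"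
      unfolding slash_lin sum_subtractf[symmetric] right_diff_distrib[symmetric] using W(3) by simp
    show "slash k (mat 1) (\<lambda>i j. \<Sum>n\<in>A. c n * R n i j) z + slash k Umat (\<lambda>i j. \<Sum>n\<in>A. c n * R n i j) z + slash k (Umat ** Umat) (\<lambda>i j. \<Sum>n\<in>A. c n * R n i j) z = 0"
      unfolding slash_lin sum.distrib[symmetric] distrib_left[symmetric] using W(4) by simp
    show "slash k (mat 1) (\<lambda>i j. \<Sum>n\<in>A. c n * R n i j) z + slash k Emat (\<lambda>i j. \<Sum>n\<in>A. c n * R n i j) z + slash k (Emat ** Emat) (\<lambda>i j. \<Sum>n\<in>A. c n * R n i j) z = 0"
      unfolding slash_lin sum.distrib[symmetric] distrib_left[symmetric] using W(5) by simp
  qed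
qed

lemma epsP_pow: "(epsP ^^ n) P = (\<lambda>i j. P i j * zeta^(n*(i + 5*j)))"
proof (induction n)
  case 0 then show ?case by simp
next
  case (Suc n)
  have "(epsP ^^ Suc n) P = epsP ((epsP ^^ n) P)" by simp
  also have "\<dots> = (\<lambda>i j. P i j * zeta^(Suc n*(i + 5*j)))"
  proof (intro ext)
    fix i j
    have eq: "Suc n * (i + 5*j) = n*(i+5*j) + i + 5*j" by simp
    have "zeta^(Suc n*(i + 5*j)) = zeta^(n*(i+5*j)) * zeta^i * (zeta^5)^j"
      by (simp only: eq power_add power_mult)
    then show "epsP ((epsP ^^ n) P) i j = P i j * zeta^(Suc n*(i + 5*j))"
      unfolding Suc.IH epsP_def cnj_z by (simp add: mult.assoc)
  qed
  finally show ?case .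
qed

lemma epsP_pow_W: "P \<in> Wkk k \<Longrightarrow> (epsP ^^ n) P \<in> Wkk k"
  by (induction n) (auto simp: epsP_W)

lemma slash_eps3: "slash k eps3 P = evalP k (epsP P)"
  by (simp add: fun_eq_iff slash_FF evalP_FF FF_eps)

definition Qm :: "(nat \<Rightarrow> nat \<Rightarrow> complex) \<Rightarrow> nat \<Rightarrow> (nat \<Rightarrow> nat \<Rightarrow> complex)" where
  "Qm P m = (\<lambda>i j. if (i + 5*j) mod 6 = m mod 6 then P i j else 0)"

lemma six: "(x::nat) < 6 \<Longrightarrow> x \<in> {0,1,2,3,4,5}" by auto
lemma mod6_aux: "(x::nat) < 6 \<Longrightarrow> y < 6 \<Longrightarrow> ((5*x+y) mod 6 = 0) = (y = x)"
proof -
  assume "x < 6" "y < 6"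
  then have "x \<in> {0,1,2,3,4,5}" "y \<in> {0,1,2,3,4,5}" using six by auto
  then show ?thesis by (elim insertE emptyE; elim insertE emptyE; simp)
qed
lemma mod6_iff: "((5*m + a) mod 6 = (0::nat)) = (a mod 6 = m mod 6)"
proof -
  have "(5*m + a) mod 6 = (5*(m mod 6) + a mod 6) mod 6" by (metis mod_add_left_eq mod_mult_right_eq mod_add_right_eq)
  then show ?thesis using mod6_aux[of "m mod 6" "a mod 6"] by simp
qed
lemma mod16: "m \<in> {1..6::nat} \<Longrightarrow> m mod 6 = (if m = 6 then 0 else m)"
  by auto

lemma Qm_avg: "Qm P m = (\<lambda>i j. \<Sum>n<6. (zeta^(5*m*n) / 6) * (epsP ^^ n) P i j)"
proof (intro ext)
  fix i j
  have "(\<Sum>n<6. (zeta^(5*m*n) / 6) * (epsP ^^ n) P i j) = P i j / 6 * (\<Sum>n<6. zeta^(n*(5*m + i + 5*j)))"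
    by (simp add: epsP_pow sum_distrib_left algebra_simps flip: power_add)
  also have "\<dots> = Qm P m i j"
    using mod6_iff[of m "i + 5*j"] unfolding root_sum Qm_def by (simp add: add.assoc)
  finally show "Qm P m i j = (\<Sum>n<6. (zeta^(5*m*n) / 6) * (epsP ^^ n) P i j)" ..
qed

lemma Qm_W: "P \<in> Wkk k \<Longrightarrow> Qm P m \<in> Wkk k"
  unfolding Qm_avg by (rule W_lin) (rule epsP_pow_W)

lemma Qm_eig: "P \<in> Wkk k \<Longrightarrow> Qm P m \<in> Weig k (zeta^m)"
  unfolding Weig_def
proof (intro CollectI conjI allI)
  assume P: "P \<in> Wkk k"
  show "Qm P m \<in> Wkk k" using Qm_W[OF P] .
  fix z
  have "evalP k (Qm P m) (zeta * z) = (\<Sum>i\<le>k. \<Sum>j\<le>k. zeta^m * (Qm P m i j * z^i * cnj z^j))"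
    unfolding evalP_def
  proof (intro sum.cong refl)
    fix i j
    show "Qm P m i j * (zeta * z)^i * cnj (zeta * z)^j = zeta^m * (Qm P m i j * z^i * cnj z^j)"
    proof (cases "(i + 5*j) mod 6 = m mod 6")
      case True
      have "zeta^i * cnj zeta^j = zeta^(i + 5*j)" by (simp add: cnj_z power_add power_mult)
      also have "\<dots> = zeta^m" using True z_mod by metis
      finally have "zeta^i * cnj zeta^j = zeta^m" .
      then show ?thesis by (simp add: power_mult_distrib mult_ac)
    next
      case False then show ?thesis by (simp add: Qm_def)
    qed
  qed
  also have "\<dots> = zeta^m * evalP k (Qm P m) z"
    unfolding evalP_def by (simp add: sum_distrib_left)
  finally show "evalP k (Qm P m) (zeta * z) = zeta^m * evalP k (Qm P m) z" .
qed

lemma Qm_sum: "(\<lambda>i j. \<Sum>m\<in>{1..6}. Qm P m i j) = P"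
proof (intro ext)
  fix i j :: nat
  define r where "r = (if (i + 5*j) mod 6 = 0 then 6 else (i + 5*j) mod 6)"
  have r: "r \<in> {1..6::nat}" unfolding r_def by auto
  have eq: "Qm P m i j = (if m = r then P i j else 0)" if "m \<in> {1..6}" for m
  proof -
    have "(i + 5*j) mod 6 < 6" by simp
    then have "((i + 5*j) mod 6 = m mod 6) = (m = r)" using that mod16[OF that] unfolding r_def by auto
    then show ?thesis by (simp add: Qm_def)
  qed
  have "(\<Sum>m\<in>{1..6}. Qm P m i j) = (\<Sum>m\<in>{1..6::nat}. if m = r then P i j else 0)"
    by (rule sum.cong) (simp_all add: eq)
  also have "\<dots> = P i j" using r by simp
  finally show "(\<Sum>m\<in>{1..6}. Qm P m i j) = P i j" .
qed

lemma eig_support: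
  assumes "Q \<in> Weig k (zeta^m)" "Q i j \<noteq> 0"
  shows "(i + 5*j) mod 6 = m mod 6"
proof -
  have V: "Q \<in> Vkk k" and E: "\<And>z. evalP k Q (zeta * z) = zeta^m * evalP k Q z"
    using assms(1) by (auto simp: Weig_def Wkk_def)
  have vz: "\<And>i j. k < i \<Longrightarrow> Q i j = 0" "\<And>i j. k < j \<Longrightarrow> Q i j = 0" using V by (auto simp: Vkk_def)
  have ik1: "i \<le> k"
  proof (rule ccontr)
    assume "\<not> i \<le> k" then show False using vz(1)[of i j] assms(2) by simp
  qed
  have ik2: "j \<le> k"
  proof (rule ccontr)
    assume "\<not> j \<le> k" then show False using vz(2)[of j i] assms(2) by simp
  qed
  note ik = ik1 ik2
  define c where "c i j = Q i j * (zeta^i * cnj zeta^j - zeta^m)" for i j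
  have D: "(\<Sum>i\<le>k. \<Sum>j\<le>k. c i j * z^i * cnj z^j) = evalP k Q (zeta * z) - zeta^m * evalP k Q z" for z
    unfolding c_def evalP_def
    by (simp add: sum_distrib_left sum_subtractf[symmetric] algebra_simps power_mult_distrib)
  have D0: "(\<Sum>i\<le>k. \<Sum>j\<le>k. c i j * z^i * cnj z^j) = 0" for z
    unfolding D E by simp
  have "c i j = 0" by (rule poly2_zero[OF D0 ik1 ik2])
  then have "zeta^i * cnj zeta^j = zeta^m" using assms(2) by (simp add: c_def)
  then have "zeta^(i + 5*j) = zeta^m" by (simp add: cnj_z power_add power_mult)
  then show ?thesis by (rule z_inj)
qed

theorem proposition5p6:
  fixes k :: nat
  assumes "odd k" and "1 \<le> k"
  shows "(\<lambda>P. slash k eps3 P) ` Wkk k = (\<lambda>P. evalP k P) ` Wkk k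
     \<and> Wkk k = {(\<lambda>i j. \<Sum>m\<in>{1..6}. Q m i j) | Q. \<forall>m\<in>{1..6}. Q m \<in> Weig k (zeta ^ m)}
     \<and> (\<forall>Q. (\<forall>m\<in>{1..6}. Q m \<in> Weig k (zeta ^ m)) \<and> (\<lambda>i j. \<Sum>m\<in>{1..6}. Q m i j) = (\<lambda>i j. 0)
            \<longrightarrow> (\<forall>m\<in>{1..6}. Q m = (\<lambda>i j. 0)))"
proof (intro conjI)
  show "(\<lambda>P. slash k eps3 P) ` Wkk k = (\<lambda>P. evalP k P) ` Wkk k"
  proof
    show "(\<lambda>P. slash k eps3 P) ` Wkk k \<subseteq> (\<lambda>P. evalP k P) ` Wkk k"
      using epsP_W by (auto simp: slash_eps3)
  next
    show "(\<lambda>P. evalP k P) ` Wkk k \<subseteq> (\<lambda>P. slash k eps3 P) ` Wkk k"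
    proof
      fix f assume "f \<in> (\<lambda>P. evalP k P) ` Wkk k"
      then obtain P where P: "P \<in> Wkk k" "f = evalP k P" by auto
      have "epsP ((epsP ^^ 5) P) = (epsP ^^ 6) P" by (simp add: numeral_eq_Suc)
      also have "\<dots> = P"
      proof -
        have h: "zeta^(6 * (i + 5*j)) = 1" for i j by (simp only: power_mult z6 power_one)
        show ?thesis unfolding epsP_pow h by simp
      qed
      finally have "slash k eps3 ((epsP ^^ 5) P) = f" using P by (simp add: slash_eps3)
      then show "f \<in> (\<lambda>P. slash k eps3 P) ` Wkk k" using epsP_pow_W[OF P(1)] by blast
    qed
  qed
next
  show "Wkk k = {(\<lambda>i j. \<Sum>m\<in>{1..6}. Q m i j) | Q. \<forall>m\<in>{1..6}. Q m \<in> Weig k (zeta ^ m)}"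
  proof
    show "Wkk k \<subseteq> {(\<lambda>i j. \<Sum>m\<in>{1..6}. Q m i j) | Q. \<forall>m\<in>{1..6}. Q m \<in> Weig k (zeta ^ m)}"
    proof
      fix P assume P: "P \<in> Wkk k"
      show "P \<in> {(\<lambda>i j. \<Sum>m\<in>{1..6}. Q m i j) | Q. \<forall>m\<in>{1..6}. Q m \<in> Weig k (zeta ^ m)}"
        using Qm_eig[OF P] Qm_sum[of P] by (intro CollectI exI[of _ "Qm P"]) auto
    qed
  next
    show "{(\<lambda>i j. \<Sum>m\<in>{1..6}. Q m i j) | Q. \<forall>m\<in>{1..6}. Q m \<in> Weig k (zeta ^ m)} \<subseteq> Wkk k"
    proof
      fix P assume "P \<in> {(\<lambda>i j. \<Sum>m\<in>{1..6}. Q m i j) | Q. \<forall>m\<in>{1..6}. Q m \<in> Weig k (zeta ^ m)}"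
      then obtain Q where Q: "\<forall>m\<in>{1..6}. Q m \<in> Weig k (zeta ^ m)" and P: "P = (\<lambda>i j. \<Sum>m\<in>{1..6}. Q m i j)"
        by auto
      have "(\<lambda>i j. \<Sum>m\<in>{1..6::nat}. 1 * Q m i j) \<in> Wkk k"
        by (rule W_lin) (use Q in \<open>auto simp: Weig_def\<close>)
      then show "P \<in> Wkk k" using P by simp
    qed
  qed
next
  show "\<forall>Q. (\<forall>m\<in>{1..6}. Q m \<in> Weig k (zeta ^ m)) \<and> (\<lambda>i j. \<Sum>m\<in>{1..6}. Q m i j) = (\<lambda>i j. 0)
            \<longrightarrow> (\<forall>m\<in>{1..6}. Q m = (\<lambda>i j. 0))"
  proof (intro allI impI ballI ext)
    fix Q :: "nat \<Rightarrow> nat \<Rightarrow> nat \<Rightarrow> complex" and m i j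
    assume H: "(\<forall>m\<in>{1..6}. Q m \<in> Weig k (zeta ^ m)) \<and> (\<lambda>i j. \<Sum>m\<in>{1..6}. Q m i j) = (\<lambda>i j. 0)"
      and m: "m \<in> {1..6::nat}"
    show "Q m i j = 0"
    proof (rule ccontr)
      assume ne: "Q m i j \<noteq> 0"
      have Qm_in: "Q m \<in> Weig k (zeta ^ m)" using H m by blast
      have sm: "(i + 5*j) mod 6 = m mod 6" by (rule eig_support[OF Qm_in ne])
      have oth: "Q m' i j = 0" if "m' \<in> {1..6} - {m}" for m'
      proof (rule ccontr)
        assume "Q m' i j \<noteq> 0"
        moreover have "Q m' \<in> Weig k (zeta ^ m')" using H that by blast
        ultimately have "(i + 5*j) mod 6 = m' mod 6" by (intro eig_support)
        then have "m' mod 6 = m mod 6" using sm by simp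
        then show False using that m mod16[OF m] mod16[of m'] by (auto split: if_splits)
      qed
      have "(\<Sum>m\<in>{1..6}. Q m i j) = 0" using H by meson
      moreover have "(\<Sum>m\<in>{1..6}. Q m i j) = Q m i j + (\<Sum>m'\<in>{1..6} - {m}. Q m' i j)"
        using m by (simp add: sum.remove)
      ultimately show False using oth ne by simp
    qed
  qed
qed

end
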